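(* The sequence $\{k^2+k\}_{k=0}^{\infty}$ is a Legendre multiplier sequence.
   Context: The Legendre polynomials $\mathfrak{Le}_n(x)$ are defined by $\frac{1}{\sqrt{1-2xt+t^2}}=\sum_{k=0}^{\infty}\mathfrak{Le}_k(x)t^k$. A real sequence $\{\gamma_k\}_{k=0}^{\infty}$ is a Legendre multiplier sequence if, for every $n$ and all real $a_0,\dots,a_n$, the polynomial $\sum_{k=0}^n a_k\gamma_k\mathfrak{Le}_k(x)$ has only real zeros whenever $\sum_{k=0}^n a_k\mathfrak{Le}_k(x)$ has only real zeros. *)

theory Defs
  imports "HOL-Computational_Algebra.Polynomial" Complex_Main
begin

text \<open>Legendre polynomials, via the three-term recurrence
  (n+2) P_{n+2} = (2n+3) x P_{n+1} - (n+1) P_n, P_0 = 1, P_1 = x,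
  which is equivalent to the generating function 1/sqrt(1-2xt+t^2).\<close>
fun legendre :: "nat \<Rightarrow> real poly" where
  "legendre 0 = 1"
| "legendre (Suc 0) = [:0, 1:]"
| "legendre (Suc (Suc n)) =
     smult (1 / real (n + 2))
       (smult (real (2 * n + 3)) ([:0, 1:] * legendre (Suc n)) - smult (real (n + 1)) (legendre n))"

definition only_real_zeros :: "real poly \<Rightarrow> bool" where
  "only_real_zeros p \<longleftrightarrow>
     p = 0 \<or> (\<forall>z::complex. poly (map_poly complex_of_real p) z = 0 \<longrightarrow> Im z = 0)"

definition legendre_multiplier_sequence :: "(nat \<Rightarrow> real) \<Rightarrow> bool" where
  "legendre_multiplier_sequence \<gamma> \<longleftrightarrow>
     (\<forall>(n::nat) (a::nat \<Rightarrow> real).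
        only_real_zeros (\<Sum>k\<le>n. smult (a k) (legendre k)) \<longrightarrow>
        only_real_zeros (\<Sum>k\<le>n. smult (a k * \<gamma> k) (legendre k)))"

end

theory Submission imports Defs "HOL-Computational_Algebra.Fundamental_Theorem_Algebra"
begin

abbreviation cp :: "real poly \<Rightarrow> complex poly" where "cp p \<equiv> map_poly complex_of_real p"

lemma cp_add: "cp (p + q) = cp p + cp q"
  by (rule poly_eqI) (simp add: coeff_map_poly)

lemma cp_smult: "cp (smult c p) = smult (of_real c) (cp p)"
  by (rule map_poly_smult) auto

lemma cp_pCons: "cp (pCons c p) = pCons (of_real c) (cp p)"
  by (rule map_poly_pCons) auto

lemma cp_mult: "cp (p * q) = cp p * cp q"
  by (induction p) (auto simp: cp_add cp_smult cp_pCons)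

lemma cp_pderiv: "cp (pderiv p) = pderiv (cp p)"
  by (rule poly_eqI) (simp add: coeff_map_poly coeff_pderiv)

lemma cp_eval_real: "poly (cp p) (of_real x) = of_real (poly p x)"
  by (induction p) (auto simp: cp_pCons)

lemma cp_degree: "degree (cp p) = degree p"
  by (rule degree_map_poly) auto

lemma orz_mult: "only_real_zeros p \<Longrightarrow> only_real_zeros q \<Longrightarrow> only_real_zeros (p * q)"
  unfolding only_real_zeros_def by (auto simp: cp_mult)

lemma im_inv_lin:
  fixes z :: complex and r :: real
  assumes "Im z \<noteq> 0"
  shows "Im (1 / (z - of_real r)) * Im z < 0"
proof -
  have d: "(Re (z - of_real r))\<^sup>2 + (Im (z - of_real r))\<^sup>2 > 0"
    using assms by (simp add: sum_power2_gt_zero_iff)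
  have "Im (1 / (z - of_real r)) = - Im z / ((Re (z - of_real r))\<^sup>2 + (Im (z - of_real r))\<^sup>2)"
    by (simp add: Im_divide)
  then have "Im (1 / (z - of_real r)) * Im z = - (Im z)\<^sup>2 / ((Re (z - of_real r))\<^sup>2 + (Im (z - of_real r))\<^sup>2)"
    by (simp add: power2_eq_square)
  also have "\<dots> < 0" using d assms by (simp add: divide_neg_pos)
  finally show ?thesis .
qed

lemma frac_aux:
  fixes w q q' :: complex
  assumes "q \<noteq> 0" "w \<noteq> 0"
  shows "(q + w * q') / (w * q) = 1 / w + q' / q"
  using assms by (simp add: field_simps)

lemma key:
  assumes "only_real_zeros p" "p \<noteq> 0" "Im z \<noteq> 0"
  shows "poly (cp p) z \<noteq> 0 \<and> Im (poly (pderiv (cp p)) z / poly (cp p) z) * Im z \<le> 0 \<and>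
         (degree p > 0 \<longrightarrow> Im (poly (pderiv (cp p)) z / poly (cp p) z) * Im z < 0)"
  using assms
proof (induction "degree p" arbitrary: p rule: less_induct)
  case less
  have nz: "poly (cp p) z \<noteq> 0"
    using less.prems unfolding only_real_zeros_def by auto
  show ?case
  proof (cases "degree p = 0")
    case True
    then obtain a where "p = pCons a 0" by (rule degree_eq_zeroE)
    then have "pderiv (cp p) = 0" by (simp add: cp_pCons pderiv_pCons)
    then show ?thesis using nz True by simp
  next
    case False
    then have "\<not> constant (poly (cp p))" by (simp add: constant_degree cp_degree)
    then obtain w where w: "poly (cp p) w = 0" using fundamental_theorem_of_algebra by blast
    then have "Im w = 0" using less.prems unfolding only_real_zeros_def by auto
    then have "w = of_real (Re w)" by (simp add: complex_eq_iff)
    define r where "r = Re w"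
    have "poly p r = 0" using w \<open>w = of_real (Re w)\<close> cp_eval_real[of p r] by (simp add: r_def)
    then obtain q where pq: "p = [:-r,1:] * q" using poly_eq_0_iff_dvd by (metis dvdE)
    have qnz: "q \<noteq> 0" using pq less.prems by auto
    have dq: "degree p = 1 + degree q" using qnz unfolding pq by (subst degree_mult_eq) auto
    have "cp p = cp [:-r,1:] * cp q" by (simp only: pq cp_mult)
    moreover have "cp [:-r,1:] = [:- of_real r, 1:]" by (simp add: cp_pCons)
    ultimately have cpp: "cp p = [:- of_real r, 1:] * cp q" by simp
    have orzq: "only_real_zeros q"
      unfolding only_real_zeros_def
    proof (intro disjI2 allI impI)
      fix u assume "poly (cp q) u = 0"
      then have "poly (cp p) u = 0" unfolding cpp by simp
      then show "Im u = 0" using less.prems unfolding only_real_zeros_def by auto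
    qed
    from less.hyps[of q] dq orzq qnz less.prems(3)
    have IH: "poly (cp q) z \<noteq> 0" "Im (poly (pderiv (cp q)) z / poly (cp q) z) * Im z \<le> 0"
      by auto
    have zr: "z - of_real r \<noteq> 0" using less.prems(3) by auto
    have E: "pderiv (cp p) = cp q + [:- of_real r, 1:] * pderiv (cp q)"
      unfolding cpp pderiv_mult by (simp add: pderiv_pCons)
    have "poly (pderiv (cp p)) z = poly (cp q + [:- of_real r, 1:] * pderiv (cp q)) z"
      by (simp only: E)
    then have "poly (pderiv (cp p)) z = poly (cp q) z + (z - of_real r) * poly (pderiv (cp q)) z"
      by (simp add: algebra_simps)
    moreover have "poly (cp p) z = (z - of_real r) * poly (cp q) z" unfolding cpp by (simp add: algebra_simps)
    ultimately have "poly (pderiv (cp p)) z / poly (cp p) z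
        = 1 / (z - of_real r) + poly (pderiv (cp q)) z / poly (cp q) z"
      using IH(1) zr by (simp add: frac_aux)
    then have "Im (poly (pderiv (cp p)) z / poly (cp p) z) * Im z =
       Im (1 / (z - of_real r)) * Im z + Im (poly (pderiv (cp q)) z / poly (cp q) z) * Im z"
      by (simp add: distrib_right)
    moreover have "Im (1 / (z - of_real r)) * Im z < 0" using im_inv_lin less.prems(3) by blast
    ultimately show ?thesis using IH nz by linarith
  qed
qed

lemma orz_pderiv: "only_real_zeros p \<Longrightarrow> only_real_zeros (pderiv p)"
proof -
  assume a: "only_real_zeros p"
  show ?thesis
  proof (cases "pderiv p = 0")
    case True then show ?thesis by (simp add: only_real_zeros_def)
  next
    case False
    then have "p \<noteq> 0" "degree p > 0"
      by (auto, metis pderiv_0 gr0I degree_eq_zeroE pderiv_pCons add_0 pCons_0_0 pderiv_0)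
    show ?thesis unfolding only_real_zeros_def
    proof (intro disjI2 allI impI)
      fix z assume z: "poly (cp (pderiv p)) z = 0"
      show "Im z = 0"
      proof (rule ccontr)
        assume "Im z \<noteq> 0"
        from key[OF a \<open>p \<noteq> 0\<close> this] \<open>degree p > 0\<close> z show False by (simp add: cp_pderiv)
      qed
    qed
  qed
qed


abbreviation XX :: "real poly" where "XX \<equiv> [:0,1:]"

lemma smult_nat: "smult (real n) p = of_nat n * p"
  by (simp add: of_nat_poly)

lemma pderiv_ofnat_mult: "pderiv (of_nat n * p :: real poly) = of_nat n * pderiv p"
  by (metis smult_nat pderiv_smult)

lemma pderiv_XX_mult: "pderiv (XX * p) = p + XX * pderiv p"
  by (simp add: pderiv_mult pderiv_pCons)

lemma leg_rec:
  "of_nat (n+2) * legendre (Suc (Suc n)) =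
     of_nat (2*n+3) * (XX * legendre (Suc n)) - of_nat (n+1) * legendre n"
proof -
  define Y where "Y = smult (real (2 * n + 3)) (XX * legendre (Suc n)) - smult (real (n + 1)) (legendre n)"
  have L: "legendre (Suc (Suc n)) = smult (1 / real (n + 2)) Y" unfolding Y_def by simp
  have "of_nat (n+2) * legendre (Suc (Suc n)) = smult (real (n+2)) (smult (1 / real (n + 2)) Y)"
    unfolding L smult_nat ..
  also have "\<dots> = Y" by (simp only: smult_smult) simp
  finally show ?thesis unfolding Y_def by (simp only: smult_nat)
qed

lemma leg_AB:
  "pderiv (legendre (Suc n)) = XX * pderiv (legendre n) + of_nat (n+1) * legendre n \<and>
   XX * pderiv (legendre (Suc n)) - pderiv (legendre n) = of_nat (n+1) * legendre (Suc n)"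
proof (induction n)
  case 0
  show ?case by (simp add: pderiv_pCons)
next
  case (Suc n)
  define P0 where "P0 = legendre n"
  define P1 where "P1 = legendre (Suc n)"
  define P2 where "P2 = legendre (Suc (Suc n))"
  define D0 where "D0 = pderiv P0"
  define D1 where "D1 = pderiv P1"
  define D2 where "D2 = pderiv P2"
  have A: "D1 = XX * D0 + of_nat (n+1) * P0" and B: "XX * D1 - D0 = of_nat (n+1) * P1"
    using Suc.IH unfolding D0_def D1_def P0_def P1_def by auto
  have R: "of_nat (n+2) * P2 = of_nat (2*n+3) * (XX * P1) - of_nat (n+1) * P0"
    unfolding P0_def P1_def P2_def by (rule leg_rec)
  have RD: "of_nat (n+2) * D2 = of_nat (2*n+3) * (P1 + XX * D1) - of_nat (n+1) * D0"
  proof -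
    have "pderiv (of_nat (n+2) * P2) = pderiv (of_nat (2*n+3) * (XX * P1) - of_nat (n+1) * P0)"
      by (simp only: R)
    then show ?thesis unfolding D0_def D1_def D2_def
      by (simp only: pderiv_ofnat_mult pderiv_diff pderiv_XX_mult)
  qed
  have "of_nat (n+2) * D2 = of_nat (n+2) * (XX * D1 + of_nat (n+2) * P1)"
  proof -
    have D0e: "D0 = XX * D1 - of_nat (n+1) * P1" using B by (simp add: algebra_simps)
    show ?thesis unfolding RD D0e by (simp add: algebra_simps)
  qed
  then have A2: "D2 = XX * D1 + of_nat (n+2) * P1"
    by (metis mult_left_cancel of_nat_eq_0_iff add_2_eq_Suc' nat.distinct(1))
  have C: "XX * XX * D1 - D1 = of_nat (n+1) * (XX * P1) - of_nat (n+1) * P0"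
  proof -
    have X1: "XX * D1 = of_nat (n+1) * P1 + D0" using B by (simp add: algebra_simps)
    have "XX * XX * D1 = XX * (XX * D1)" by (simp add: mult.assoc)
    also have "\<dots> = of_nat (n+1) * (XX * P1) + XX * D0" unfolding X1 by (simp add: algebra_simps)
    finally show ?thesis using A by (simp add: algebra_simps)
  qed
  have B2: "XX * D2 - D1 = of_nat (n+2) * P2"
  proof -
    have "XX * D2 - D1 = (XX * XX * D1 - D1) + of_nat (n+2) * (XX * P1)"
      unfolding A2 by (simp add: algebra_simps)
    also have "\<dots> = of_nat (2*n+3) * (XX * P1) - of_nat (n+1) * P0"
      unfolding C by (simp add: algebra_simps)
    finally show ?thesis using R by simp
  qed
  show ?case using A2 B2 unfolding D2_def D1_def P2_def P1_def
    by (simp add: add.commute)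
qed

lemma leg_ode:
  "pderiv ([:-1,0,1:] * pderiv (legendre n)) = smult (real n ^ 2 + real n) (legendre n)"
proof (cases n)
  case 0
  then show ?thesis by simp
next
  case (Suc m)
  define P0 where "P0 = legendre m"
  define P1 where "P1 = legendre (Suc m)"
  define D0 where "D0 = pderiv P0"
  define D1 where "D1 = pderiv P1"
  have A: "D1 = XX * D0 + of_nat (m+1) * P0" and B: "XX * D1 - D0 = of_nat (m+1) * P1"
    using leg_AB[of m] unfolding D0_def D1_def P0_def P1_def by auto
  have Q: "[:-1,0,1:] = XX * XX - (1 :: real poly)"
    by (simp add: one_pCons)
  have C: "[:-1,0,1:] * D1 = of_nat (m+1) * (XX * P1) - of_nat (m+1) * P0"
  proof -
    have X1: "XX * D1 = of_nat (m+1) * P1 + D0" using B by (simp add: algebra_simps)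
    have "XX * XX * D1 = XX * (XX * D1)" by (simp add: mult.assoc)
    also have "\<dots> = of_nat (m+1) * (XX * P1) + XX * D0" unfolding X1 by (simp add: algebra_simps)
    finally show ?thesis unfolding Q using A by (simp add: algebra_simps)
  qed
  have "pderiv ([:-1,0,1:] * D1) = of_nat (m+1) * (P1 + XX * D1) - of_nat (m+1) * D0"
    unfolding C D0_def by (simp only: pderiv_ofnat_mult pderiv_diff pderiv_XX_mult D1_def)
  also have "\<dots> = of_nat (m+1) * (of_nat (m+2) * P1)"
  proof -
    have D0e: "D0 = XX * D1 - of_nat (m+1) * P1" using B by (simp add: algebra_simps)
    show ?thesis unfolding D0e by (simp add: algebra_simps)
  qed
  also have "\<dots> = smult (real n ^ 2 + real n) P1"
    using Suc by (simp add: of_nat_poly power2_eq_square algebra_simps)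
  finally show ?thesis using Suc unfolding D1_def P1_def by simp
qed


lemma pderiv_sum': "pderiv (sum f A) = (\<Sum>x\<in>A. pderiv (f x))"
  by (induction A rule: infinite_finite_induct) (simp_all add: pderiv_add)

lemma orz_quad: "only_real_zeros [:-1,0,1:]"
  unfolding only_real_zeros_def
proof (intro disjI2 allI impI)
  fix z :: complex assume "poly (cp [:-1,0,1:]) z = 0"
  then have "z * z = 1" by (simp add: cp_pCons algebra_simps)
  then have "z = 1 \<or> z = -1"
    by (metis power2_eq_square power2_eq_1_iff)
  then show "Im z = 0" by auto
qed

theorem lemma4p6:
  shows "legendre_multiplier_sequence (\<lambda>k. real k ^ 2 + real k)"
  unfolding legendre_multiplier_sequence_def
proof (intro allI impI)
  fix n :: nat and a :: "nat \<Rightarrow> real"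
  let ?S = "\<Sum>k\<le>n. smult (a k) (legendre k)"
  assume h: "only_real_zeros ?S"
  have "pderiv ([:-1,0,1:] * pderiv ?S) = (\<Sum>k\<le>n. smult (a k) (pderiv ([:-1,0,1:] * pderiv (legendre k))))"
    by (simp add: pderiv_sum' sum_distrib_left pderiv_smult)
  also have "\<dots> = (\<Sum>k\<le>n. smult (a k * (real k ^ 2 + real k)) (legendre k))"
    by (rule sum.cong) (simp_all only: leg_ode smult_smult)
  finally have e: "pderiv ([:-1,0,1:] * pderiv ?S) = (\<Sum>k\<le>n. smult (a k * (real k ^ 2 + real k)) (legendre k))" .
  have "only_real_zeros (pderiv ([:-1,0,1:] * pderiv ?S))"
    by (intro orz_pderiv orz_mult orz_quad h)
  then show "only_real_zeros (\<Sum>k\<le>n. smult (a k * (real k ^ 2 + real k)) (legendre k))"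
    unfolding e .
qed

end
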